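(* Let $\mathcal{S}$ and $\mathcal{A}$ be finite state and action sets, let $r:\mathcal{S}\times\mathcal{A}\to\mathbb{R}$ be a reward function, let $\pi_{\mathrm{ref}}$ be a reference policy, and let $A^{\pi_{\mathrm{ref}}}$ be its (unregularized) advantage function. Let $\beta>0$, let $\theta\mapsto\pi_\theta$ be a differentiable parameterization of policies with $\pi_\theta(a|s)>0$ for all $s,a,\theta$, fix a state $s\in\mathcal{S}$, and fix a parameter value $\theta_k$. Define $$\mathcal{I}_s(\pi_\theta,\pi_{\mathrm{ref}}) := \mathbb{E}_{a\sim\pi_\theta(\cdot|s)}\left[A^{\pi_{\mathrm{ref}}}(s,a)-\beta\log\frac{\pi_\theta(a|s)}{\pi_{\mathrm{ref}}(a|s)}\right]$$ and the surrogate function $$\mathcal{H}_s^k(\pi_\theta,\pi_{\mathrm{ref}}) := \frac12\,\mathbb{E}_{a\sim\pi_{\theta_k}(\cdot|s)}\left[\left(\frac1\beta A^{\pi_{\mathrm{ref}}}(s,a)-\log\frac{\pi_\theta(a|s)}{\pi_{\mathrm{ref}}(a|s)}\right)^2\right],$$ where in $\mathcal{H}_s^k$ the sampling distribution $\pi_{\theta_k}$ is held fixed while $\theta$ varies. Then, with both gradients evaluated at $\theta=\theta_k$, $$\nabla_\theta \mathcal{I}_s(\pi_{\theta},\pi_{\mathrm{ref}})\big|_{\theta=\theta_k} = -\beta\,\nabla_\theta \mathcal{H}_s^k(\pi_\theta,\pi_{\mathrm{ref}})\big|_{\theta=\theta_k}.$$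
   Context: A deterministic MDP with finite state space $\mathcal{S}$, finite action space $\mathcal{A}$, deterministic transition $f:\mathcal{S}\times\mathcal{A}\to\mathcal{S}$ and reward $r$; episodes terminate after a finite (possibly random) number $T$ of steps at a terminal state. A policy $\pi$ maps each state to a distribution $\pi(\cdot|s)\in\Delta(\mathcal{A})$. The unregularized value is $V^\pi(s)=\mathbb{E}[\sum_{t=0}^{T-1} r(s_t,a_t)\mid s_0=s]$ with $a_t\sim\pi(\cdot|s_t)$, $s_{t+1}=f(s_t,a_t)$; $Q^\pi(s,a)=r(s,a)+V^\pi(f(s,a))$ and $A^\pi(s,a)=Q^\pi(s,a)-V^\pi(s)$. *)

theory Defs
  imports "HOL-Analysis.Analysis"
begin

text \<open>The deterministic MDP is given by a transition f, reward r and a set Term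
  of terminal states (episodes stop on reaching Term).\<close>

definition is_policy :: "('s::finite \<Rightarrow> 'a::finite \<Rightarrow> real) \<Rightarrow> bool" where
  "is_policy pol \<longleftrightarrow> (\<forall>s a. 0 \<le> pol s a) \<and> (\<forall>s. (\<Sum>a\<in>UNIV. pol s a) = 1)"

fun value_trunc :: "('s \<Rightarrow> 'a \<Rightarrow> 's) \<Rightarrow> ('s \<Rightarrow> 'a \<Rightarrow> real) \<Rightarrow> 's set
    \<Rightarrow> ('s \<Rightarrow> 'a::finite \<Rightarrow> real) \<Rightarrow> nat \<Rightarrow> 's \<Rightarrow> real" where
  "value_trunc f r Term pol 0 s = 0"
| "value_trunc f r Term pol (Suc n) s =
     (if s \<in> Term then 0
      else (\<Sum>a\<in>UNIV. pol s a * (r s a + value_trunc f r Term pol n (f s a))))"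

definition value_fun :: "('s \<Rightarrow> 'a \<Rightarrow> 's) \<Rightarrow> ('s \<Rightarrow> 'a \<Rightarrow> real) \<Rightarrow> 's set
    \<Rightarrow> ('s \<Rightarrow> 'a::finite \<Rightarrow> real) \<Rightarrow> 's \<Rightarrow> real" where
  "value_fun f r Term pol s = lim (\<lambda>n. value_trunc f r Term pol n s)"

definition Q_fun :: "('s \<Rightarrow> 'a \<Rightarrow> 's) \<Rightarrow> ('s \<Rightarrow> 'a \<Rightarrow> real) \<Rightarrow> 's set
    \<Rightarrow> ('s \<Rightarrow> 'a::finite \<Rightarrow> real) \<Rightarrow> 's \<Rightarrow> 'a \<Rightarrow> real" where
  "Q_fun f r Term pol s a = r s a + value_fun f r Term pol (f s a)"

definition advantage :: "('s \<Rightarrow> 'a \<Rightarrow> 's) \<Rightarrow> ('s \<Rightarrow> 'a \<Rightarrow> real) \<Rightarrow> 's set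
    \<Rightarrow> ('s \<Rightarrow> 'a::finite \<Rightarrow> real) \<Rightarrow> 's \<Rightarrow> 'a \<Rightarrow> real" where
  "advantage f r Term pol s a = Q_fun f r Term pol s a - value_fun f r Term pol s"

definition I_obj :: "real \<Rightarrow> ('s \<Rightarrow> 'a::finite \<Rightarrow> real) \<Rightarrow> ('s \<Rightarrow> 'a \<Rightarrow> real)
    \<Rightarrow> ('s \<Rightarrow> 'a \<Rightarrow> real) \<Rightarrow> 's \<Rightarrow> real" where
  "I_obj \<beta> Adv pol pref s =
     (\<Sum>a\<in>UNIV. pol s a * (Adv s a - \<beta> * ln (pol s a / pref s a)))"

definition H_surr :: "real \<Rightarrow> ('s \<Rightarrow> 'a::finite \<Rightarrow> real) \<Rightarrow> ('s \<Rightarrow> 'a \<Rightarrow> real)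
    \<Rightarrow> ('s \<Rightarrow> 'a \<Rightarrow> real) \<Rightarrow> ('s \<Rightarrow> 'a \<Rightarrow> real) \<Rightarrow> 's \<Rightarrow> real" where
  "H_surr \<beta> Adv pik pol pref s =
     1/2 * (\<Sum>a\<in>UNIV. pik s a * (Adv s a / \<beta> - ln (pol s a / pref s a))\<^sup>2)"

end

theory Submission
  imports Defs
begin

lemma GDERIV_sum_fin:
  fixes f :: "'i \<Rightarrow> 'p::real_inner \<Rightarrow> real"
  assumes "finite S" "\<And>a. a \<in> S \<Longrightarrow> GDERIV (f a) x :> g a"
  shows "GDERIV (\<lambda>y. \<Sum>a\<in>S. f a y) x :> (\<Sum>a\<in>S. g a)"
  using assms
proof (induction S rule: finite_induct)
  case empty
  then show ?case by (simp add: GDERIV_const)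
next
  case (insert a S)
  then show ?case by (simp add: GDERIV_add)
qed

lemma GDERIV_ln_div:
  fixes p :: "'p::real_inner \<Rightarrow> real"
  assumes "GDERIV p x :> G" "p x > 0" "q > 0"
  shows "GDERIV (\<lambda>y. ln (p y / q)) x :> (1 / p x) *\<^sub>R G"
proof -
  have "DERIV (\<lambda>t. ln (t / q)) (p x) :> 1 / p x"
    using assms(2,3)
    by (auto intro!: derivative_eq_intros simp: field_simps)
  from GDERIV_DERIV_compose[OF assms(1) this] show ?thesis .
qed

lemma grad_exists:
  fixes p :: "'p::euclidean_space \<Rightarrow> real"
  assumes "p differentiable (at x)"
  shows "\<exists>G. GDERIV p x :> G"
proof -
  from assms obtain D where D: "(p has_derivative D) (at x)"
    unfolding differentiable_def by blast
  then have lin: "linear D" using has_derivative_linear by blast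
  have "D = (\<lambda>h. h \<bullet> adjoint D 1)"
    by (rule ext) (simp add: adjoint_works[OF lin])
  with D show ?thesis unfolding gderiv_def by metis
qed

lemma GDERIV_unique:
  fixes p :: "'p::euclidean_space \<Rightarrow> real"
  assumes "GDERIV p x :> G1" "GDERIV p x :> G2"
  shows "G1 = G2"
proof -
  have "(\<lambda>h. h \<bullet> G1) = (\<lambda>h. h \<bullet> G2)"
    using assms unfolding gderiv_def by (rule has_derivative_unique)
  then have "(G1 - G2) \<bullet> G1 = (G1 - G2) \<bullet> G2" by metis
  then have "(G1 - G2) \<bullet> (G1 - G2) = 0" by (simp add: inner_diff_right)
  then show ?thesis by simp
qed

theorem mainTheorem1:
  fixes f :: "'s::finite \<Rightarrow> 'a::finite \<Rightarrow> 's"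
    and r :: "'s \<Rightarrow> 'a \<Rightarrow> real"
    and Term :: "'s set"
    and pref :: "'s \<Rightarrow> 'a \<Rightarrow> real"
    and \<pi> :: "'p::euclidean_space \<Rightarrow> 's \<Rightarrow> 'a \<Rightarrow> real"
    and \<beta> :: real
    and s :: 's
    and \<theta>k :: 'p
  assumes pref_policy: "is_policy pref"
    and pref_pos: "\<And>s a. pref s a > 0"
    and beta_pos: "\<beta> > 0"
    and pi_policy: "\<And>\<theta>. is_policy (\<pi> \<theta>)"
    and pi_pos: "\<And>\<theta> s a. \<pi> \<theta> s a > 0"
    and pi_diff: "\<And>\<theta> s a. (\<lambda>\<theta>'. \<pi> \<theta>' s a) differentiable (at \<theta>)"
  shows "\<exists>gI gH.
     GDERIV (\<lambda>\<theta>. I_obj \<beta> (advantage f r Term pref) (\<pi> \<theta>) pref s) \<theta>k :> gI \<and>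
     GDERIV (\<lambda>\<theta>. H_surr \<beta> (advantage f r Term pref) (\<pi> \<theta>k) (\<pi> \<theta>) pref s) \<theta>k :> gH \<and>
     gI = - \<beta> *\<^sub>R gH"
proof -
  define A where "A = advantage f r Term pref"
  have "\<forall>a. \<exists>G. GDERIV (\<lambda>\<theta>. \<pi> \<theta> s a) \<theta>k :> G"
    using grad_exists[OF pi_diff] by blast
  then obtain G where G: "\<And>a. GDERIV (\<lambda>\<theta>. \<pi> \<theta> s a) \<theta>k :> G a"
    by metis
  define p where "p a = \<pi> \<theta>k s a" for a
  have sum0: "(\<Sum>a\<in>UNIV. G a) = 0"
  proof -
    have "GDERIV (\<lambda>\<theta>. \<Sum>a\<in>UNIV. \<pi> \<theta> s a) \<theta>k :> (\<Sum>a\<in>UNIV. G a)"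
      by (rule GDERIV_sum_fin) (auto intro: G)
    moreover have "(\<lambda>\<theta>. \<Sum>a\<in>UNIV. \<pi> \<theta> s a) = (\<lambda>\<theta>. 1)"
      using pi_policy unfolding is_policy_def by auto
    ultimately have "GDERIV (\<lambda>\<theta>. 1::real) \<theta>k :> (\<Sum>a\<in>UNIV. G a)" by simp
    then show ?thesis using GDERIV_const GDERIV_unique by blast
  qed
  have L: "\<And>a. GDERIV (\<lambda>\<theta>. ln (\<pi> \<theta> s a / pref s a)) \<theta>k :> (1 / p a) *\<^sub>R G a"
    unfolding p_def by (rule GDERIV_ln_div[OF G pi_pos pref_pos])
  define gI where "gI = (\<Sum>a\<in>UNIV. (A s a - \<beta> * ln (p a / pref s a) - \<beta>) *\<^sub>R G a)"
  define gH where "gH = (\<Sum>a\<in>UNIV. (- (A s a / \<beta> - ln (p a / pref s a))) *\<^sub>R G a)"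
  have I: "GDERIV (\<lambda>\<theta>. I_obj \<beta> A (\<pi> \<theta>) pref s) \<theta>k :> gI"
    unfolding I_obj_def gI_def
  proof (rule GDERIV_sum_fin)
    fix a :: 'a
    have "GDERIV (\<lambda>\<theta>. A s a - \<beta> * ln (\<pi> \<theta> s a / pref s a)) \<theta>k :> 0 - \<beta> *\<^sub>R ((1 / p a) *\<^sub>R G a)"
      using GDERIV_diff[OF GDERIV_const GDERIV_mult[OF GDERIV_const L]] by simp
    from GDERIV_mult[OF G[of a] this]
    show "GDERIV (\<lambda>\<theta>. \<pi> \<theta> s a * (A s a - \<beta> * ln (\<pi> \<theta> s a / pref s a))) \<theta>k
       :> (A s a - \<beta> * ln (p a / pref s a) - \<beta>) *\<^sub>R G a"
      using pi_pos[of \<theta>k s a] by (elim GDERIV_subst) (simp add: p_def algebra_simps)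
  qed simp
  have H: "GDERIV (\<lambda>\<theta>. H_surr \<beta> A (\<pi> \<theta>k) (\<pi> \<theta>) pref s) \<theta>k :> gH"
    unfolding H_surr_def gH_def
  proof -
    have "GDERIV (\<lambda>\<theta>. \<Sum>a\<in>UNIV. \<pi> \<theta>k s a * (A s a / \<beta> - ln (\<pi> \<theta> s a / pref s a))\<^sup>2) \<theta>k
      :> (\<Sum>a\<in>UNIV. (2 * (- (A s a / \<beta> - ln (p a / pref s a)))) *\<^sub>R G a)"
    proof (rule GDERIV_sum_fin)
      fix a :: 'a
      have D1: "GDERIV (\<lambda>\<theta>. A s a / \<beta> - ln (\<pi> \<theta> s a / pref s a)) \<theta>k :> 0 - (1 / p a) *\<^sub>R G a"
        using GDERIV_diff[OF GDERIV_const L] by simp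
      have D2: "DERIV (\<lambda>t. p a * t\<^sup>2) (A s a / \<beta> - ln (p a / pref s a)) :> p a * (2 * (A s a / \<beta> - ln (p a / pref s a)))"
        by (auto intro!: derivative_eq_intros)
      from GDERIV_DERIV_compose[OF D1, unfolded p_def, OF D2[unfolded p_def]]
      show "GDERIV (\<lambda>\<theta>. \<pi> \<theta>k s a * (A s a / \<beta> - ln (\<pi> \<theta> s a / pref s a))\<^sup>2) \<theta>k
         :> (2 * (- (A s a / \<beta> - ln (p a / pref s a)))) *\<^sub>R G a"
        using pi_pos[of \<theta>k s a] by (elim GDERIV_subst) (simp add: p_def algebra_simps)
    qed simp
    from GDERIV_mult[OF GDERIV_const this, of "1/2"]
    show "GDERIV (\<lambda>\<theta>. 1 / 2 * (\<Sum>a\<in>UNIV. \<pi> \<theta>k s a * (A s a / \<beta> - ln (\<pi> \<theta> s a / pref s a))\<^sup>2)) \<theta>k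
      :> (\<Sum>a\<in>UNIV. (- (A s a / \<beta> - ln (p a / pref s a))) *\<^sub>R G a)"
      by (elim GDERIV_subst) (simp add: scaleR_sum_right scaleR_scaleR field_simps)
  qed
  have eq: "gI = - \<beta> *\<^sub>R gH"
  proof -
    have "gI = (\<Sum>a\<in>UNIV. (A s a - \<beta> * ln (p a / pref s a)) *\<^sub>R G a) - \<beta> *\<^sub>R (\<Sum>a\<in>UNIV. G a)"
      unfolding gI_def by (simp add: algebra_simps scaleR_sum_right sum_subtractf sum.distrib)
    also have "\<dots> = (\<Sum>a\<in>UNIV. (A s a - \<beta> * ln (p a / pref s a)) *\<^sub>R G a)"
      using sum0 by simp
    also have "\<dots> = - \<beta> *\<^sub>R gH"
      unfolding gH_def scaleR_sum_right
      by (rule sum.cong) (use beta_pos in \<open>auto simp: scaleR_scaleR right_diff_distrib\<close>)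
    finally show ?thesis .
  qed
  show ?thesis using I H eq unfolding A_def by blast
qed

end
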